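(* Let $n>1$ be an odd perfect square. Then $C_{S(n)^*}\le 9$.
   Context: For a natural number $n$, $\mathbb Z_n=\mathbb Z/n\mathbb Z$, $S(n)=\{x^2:x\in\mathbb Z_n\}$, $S(n)^*=S(n)\setminus\{0\}$. For $A\subseteq\mathbb Z_n$, a sequence $(y_1,\dots,y_t)$ ($t\ge1$) in $\mathbb Z_n$ is an $A$-weighted zero-sum sequence if there exist $a_1,\dots,a_t\in A$ with $\sum a_iy_i=0$. $C_A(n)$ is the least positive integer $t$ such that every sequence of length $t$ in $\mathbb Z_n$ has a nonempty subsequence of consecutive terms that is an $A$-weighted zero-sum sequence; $C_{S(n)^*}=C_{S(n)^*}(n)$. *)

theory Defs
  imports Main
begin

text \<open>Z_n is modelled by the residues {0..<n} (naturals) with arithmetic mod n.\<close>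

definition S_star :: "nat \<Rightarrow> nat set" where
  "S_star n = {x ^ 2 mod n | x. x < n} - {0}"

definition weighted_zero_sum :: "nat \<Rightarrow> nat set \<Rightarrow> nat list \<Rightarrow> bool" where
  "weighted_zero_sum n A ys \<longleftrightarrow> ys \<noteq> [] \<and>
     (\<exists>a. (\<forall>i<length ys. a i \<in> A) \<and> (\<Sum>i<length ys. a i * ys ! i) mod n = 0)"

definition consec_property :: "nat \<Rightarrow> nat set \<Rightarrow> nat \<Rightarrow> bool" where
  "consec_property n A t \<longleftrightarrow>
     (\<forall>ys. length ys = t \<and> set ys \<subseteq> {0..<n} \<longrightarrow>
        (\<exists>i j. i < j \<and> j \<le> t \<and> weighted_zero_sum n A (drop i (take j ys))))"

definition C_A :: "nat \<Rightarrow> nat set \<Rightarrow> nat" where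
  "C_A n A = (LEAST t. t > 0 \<and> consec_property n A t)"

end

theory Submission
  imports Defs "HOL-Number_Theory.Number_Theory"
begin


lemma small_dvd:
  fixes p d :: int
  assumes "p dvd d" "\<bar>d\<bar> < p" shows "d = 0"
proof (rule ccontr)
  assume "d \<noteq> 0"
  hence "\<bar>p\<bar> \<le> \<bar>d\<bar>" using dvd_imp_le_int assms(1) by blast
  thus False using assms(2) by linarith
qed

lemma sq_inj_aux:
  fixes p :: int and z :: int
  assumes p: "prime p" "p > 2" and z: "\<not> p dvd z"
    and t: "t \<in> {0..(p-1) div 2}" and s: "s \<in> {0..(p-1) div 2}"
    and d: "p dvd (t^2 - s^2) * z"
  shows "t = s"
proof -
  have "p dvd (t^2 - s^2)" using d z p(1) prime_dvd_mult_iff by blast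
  moreover have "t^2 - s^2 = (t - s) * (t + s)" by (simp add: power2_eq_square algebra_simps)
  ultimately have "p dvd (t - s) * (t + s)" by simp
  hence dj: "p dvd (t - s) \<or> p dvd (t + s)" using p(1) by (simp add: prime_dvd_mult_iff)
  have "\<bar>t - s\<bar> < p" "0 \<le> t + s" "t + s < p" using t s by auto
  from dj show ?thesis
  proof
    assume h: "p dvd (t - s)" thus ?thesis using small_dvd[OF h \<open>\<bar>t - s\<bar> < p\<close>] by simp
  next
    assume h: "p dvd (t + s)" hence "t + s = 0" using small_dvd[OF h] \<open>0 \<le> t + s\<close> \<open>t + s < p\<close> by simp
    thus ?thesis using t s by auto
  qed
qed

lemma lemK:
  fixes p z1 z2 z3 :: int
  assumes p: "prime p" "p > 2" and z: "\<not> p dvd z1" "\<not> p dvd z2" "\<not> p dvd z3"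
  shows "(\<exists>a b. \<not> p dvd a \<and> \<not> p dvd b \<and> p dvd a^2*z1 + b^2*z2)
       \<or> (\<exists>a b. \<not> p dvd a \<and> \<not> p dvd b \<and> p dvd a^2*z2 + b^2*z3)
       \<or> (\<exists>a b c. \<not> p dvd a \<and> \<not> p dvd b \<and> \<not> p dvd c \<and> p dvd a^2*z1 + b^2*z2 + c^2*z3)"
proof -
  define T where "T = {0..(p-1) div 2}"
  define A where "A = (\<lambda>t. (t^2*z1) mod p) ` T"
  define B where "B = (\<lambda>t. (-z2 - t^2*z3) mod p) ` T"
  have cT: "card T = (p+1) div 2" unfolding T_def using p by auto
  have iA: "inj_on (\<lambda>t. (t^2*z1) mod p) T"
  proof (rule inj_onI)
    fix t s assume ts: "t \<in> T" "s \<in> T" "(t^2*z1) mod p = (s^2*z1) mod p"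
    hence "p dvd t^2*z1 - s^2*z1" by (simp add: mod_eq_dvd_iff)
    hence "p dvd (t^2 - s^2) * z1" by (simp add: left_diff_distrib)
    thus "t = s" using sq_inj_aux[OF p z(1)] ts unfolding T_def by blast
  qed
  have iB: "inj_on (\<lambda>t. (-z2 - t^2*z3) mod p) T"
  proof (rule inj_onI)
    fix t s assume ts: "t \<in> T" "s \<in> T" "(-z2 - t^2*z3) mod p = (-z2 - s^2*z3) mod p"
    hence "p dvd (-z2 - t^2*z3) - (-z2 - s^2*z3)" by (simp add: mod_eq_dvd_iff)
    hence "p dvd (s^2 - t^2) * z3" by (simp add: algebra_simps)
    thus "t = s" using sq_inj_aux[OF p z(3), of s t] ts unfolding T_def by auto
  qed
  have cA: "card A = (p+1) div 2" unfolding A_def using card_image[OF iA] cT by simp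
  have cB: "card B = (p+1) div 2" unfolding B_def using card_image[OF iB] cT by simp
  have sub: "A \<union> B \<subseteq> {0..<p}" unfolding A_def B_def using p by auto
  have "A \<inter> B \<noteq> {}"
  proof
    assume e: "A \<inter> B = {}"
    have fin: "finite A" "finite B" unfolding A_def B_def T_def by auto
    have "card (A \<union> B) = card A + card B" using card_Un_disjoint[OF fin e] .
    moreover have "card (A \<union> B) \<le> card {0..<p}" using card_mono[OF _ sub] by auto
    moreover have "card {0..<p} = p" using p by auto
    ultimately have "int (card A + card B) \<le> p" by linarith
    moreover have "odd p" using prime_odd_int p by blast
    hence "2 * ((p+1) div 2) = p + 1" by (simp, metis add.commute odd_two_times_div_two_succ)
    ultimately show False using cA cB by simp
  qed
  then obtain t s where ts: "t \<in> T" "s \<in> T" "(t^2*z1) mod p = (-z2 - s^2*z3) mod p"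
    unfolding A_def B_def by auto
  hence "p dvd t^2*z1 - (-z2 - s^2*z3)" by (simp add: mod_eq_dvd_iff)
  hence dv: "p dvd t^2*z1 + 1^2*z2 + s^2*z3" by (simp add: algebra_simps)
  have tb: "0 \<le> t" "t < p" "0 \<le> s" "s < p" using ts p unfolding T_def by auto
  have one: "\<not> p dvd 1" using p by auto
  show ?thesis
  proof (cases "t = 0")
    case True
    hence "p dvd 1^2*z2 + s^2*z3" using dv by simp
    moreover have "s \<noteq> 0" using True dv z(2) by auto
    hence "\<not> p dvd s" using tb zdvd_not_zless by auto
    ultimately have "\<exists>a b. \<not> p dvd a \<and> \<not> p dvd b \<and> p dvd a^2*z2 + b^2*z3"
      using one by (intro exI[of _ 1] exI[of _ s]) simp
    thus ?thesis by (intro disjI2 disjI1)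
  next
    case False
    hence nt: "\<not> p dvd t" using tb zdvd_not_zless by auto
    show ?thesis
    proof (cases "s = 0")
      case True
      hence "p dvd t^2*z1 + 1^2*z2" using dv by simp
      hence "\<exists>a b. \<not> p dvd a \<and> \<not> p dvd b \<and> p dvd a^2*z1 + b^2*z2"
        using nt one by (intro exI[of _ t] exI[of _ 1]) simp
      thus ?thesis by (intro disjI1)
    next
      case False
      hence "\<not> p dvd s" using tb zdvd_not_zless by auto
      hence "\<exists>a b c. \<not> p dvd a \<and> \<not> p dvd b \<and> \<not> p dvd c \<and> p dvd a^2*z1 + b^2*z2 + c^2*z3"
        using nt one dv by (intro exI[of _ t] exI[of _ 1] exI[of _ s]) simp
      thus ?thesis by (intro disjI2)
    qed
  qed
qed



lemma lift:
  fixes p :: int and y x :: "nat \<Rightarrow> int"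
  assumes p: "prime p" "p > 2" and fin: "finite I" and lz: "lz \<in> I" "\<not> p dvd y lz"
    and nx: "\<forall>l\<in>I. \<not> p dvd x l" and S: "p dvd (\<Sum>l\<in>I. (x l)^2 * y l)"
  shows "\<exists>x'. (\<forall>l\<in>I. \<not> p dvd x' l) \<and> p^2 dvd (\<Sum>l\<in>I. (x' l)^2 * y l)"
proof -
  obtain s where s: "(\<Sum>l\<in>I. (x l)^2 * y l) = p * s" using S by auto
  have "coprime (2 * x lz * y lz) p"
  proof -
    have "\<not> p dvd 2" using zdvd_imp_le[of p 2] p(2) by auto
    hence "\<not> p dvd 2 * x lz * y lz" using p(1) nx lz by (simp add: prime_dvd_mult_iff)
    thus ?thesis using p(1) prime_imp_coprime coprime_commute by blast
  qed
  then obtain u where u: "[2 * x lz * y lz * u = 1] (mod p)" using cong_solve_coprime_int by blast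
  define c where "c = - s * u"
  define x' where "x' = x(lz := x lz + p * c)"
  have "(\<Sum>l\<in>I. (x' l)^2 * y l) = (x' lz)^2 * y lz + (\<Sum>l\<in>I-{lz}. (x' l)^2 * y l)"
    using sum.remove[OF fin lz(1)] by blast
  also have "(\<Sum>l\<in>I-{lz}. (x' l)^2 * y l) = (\<Sum>l\<in>I-{lz}. (x l)^2 * y l)"
    unfolding x'_def by (rule sum.cong) auto
  also have "(\<Sum>l\<in>I-{lz}. (x l)^2 * y l) = p * s - (x lz)^2 * y lz"
    using sum.remove[OF fin lz(1), of "\<lambda>l. (x l)^2 * y l"] s by simp
  finally have eq: "(\<Sum>l\<in>I. (x' l)^2 * y l) = p * (s + 2 * x lz * y lz * c) + p^2 * (c^2 * y lz)"
    unfolding x'_def by (simp add: power2_eq_square algebra_simps)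
  have "[s + 2 * x lz * y lz * c = s - s * (2 * x lz * y lz * u)] (mod p)"
    unfolding c_def by (simp add: algebra_simps)
  also have "[s - s * (2 * x lz * y lz * u) = s - s * 1] (mod p)"
    using u by (intro cong_diff cong_mult cong_refl)
  finally have "p dvd s + 2 * x lz * y lz * c" by (simp add: cong_0_iff)
  hence "p^2 dvd p * (s + 2 * x lz * y lz * c)" by (simp add: power2_eq_square)
  hence "p^2 dvd (\<Sum>l\<in>I. (x' l)^2 * y l)" unfolding eq by simp
  moreover have "\<forall>l\<in>I. \<not> p dvd x' l"
  proof
    fix l assume "l \<in> I"
    show "\<not> p dvd x' l"
    proof (cases "l = lz")
      case True
      have "\<not> p dvd x lz + p * c" using nx lz by (simp add: dvd_add_left_iff)
      thus ?thesis using True unfolding x'_def by simp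
    qed (use nx \<open>l \<in> I\<close> x'_def in auto)
  qed
  ultimately show ?thesis by blast
qed

definition good :: "int \<Rightarrow> (nat \<Rightarrow> int) \<Rightarrow> nat \<Rightarrow> nat \<Rightarrow> bool" where
  "good p y i j \<longleftrightarrow> (\<exists>x. (\<forall>l\<in>{i..<j}. \<not> p dvd x l) \<and> p^2 dvd (\<Sum>l\<in>{i..<j}. (x l)^2 * y l))"

lemma good1:
  assumes "prime p" "p^2 dvd y l" shows "good p y l (Suc l)"
  unfolding good_def using assms by (intro exI[of _ "\<lambda>_. 1"]) auto

lemma good2:
  assumes "prime p" "y i = p * z1" "y (Suc i) = p * z2" "\<not> p dvd a" "\<not> p dvd b"
    "p dvd a^2*z1 + b^2*z2"
  shows "good p y i (i+2)"
proof -
  define x where "x = (\<lambda>l. if l = i then a else b)"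
  have e: "{i..<i+2} = {i, Suc i}" by auto
  have "(\<Sum>l\<in>{i..<i+2}. (x l)^2 * y l) = p * (a^2*z1 + b^2*z2)"
    unfolding e x_def using assms by (simp add: algebra_simps)
  moreover have "p^2 dvd p * (a^2*z1 + b^2*z2)" using assms(6) by (simp add: power2_eq_square)
  ultimately show ?thesis unfolding good_def using assms e x_def
    by (intro exI[of _ x]) auto
qed

lemma good3:
  assumes "prime p" "y i = p * z1" "y (Suc i) = p * z2" "y (Suc (Suc i)) = p * z3"
    "\<not> p dvd a" "\<not> p dvd b" "\<not> p dvd c"
    "p dvd a^2*z1 + b^2*z2 + c^2*z3"
  shows "good p y i (i+3)"
proof -
  define x where "x = (\<lambda>l. if l = i then a else if l = Suc i then b else c)"
  have e: "{i..<i+3} = {i, Suc i, Suc (Suc i)}" by auto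
  have "(\<Sum>l\<in>{i..<i+3}. (x l)^2 * y l) = p * (a^2*z1 + b^2*z2 + c^2*z3)"
    unfolding e x_def using assms by (simp add: algebra_simps)
  moreover have "p^2 dvd p * (a^2*z1 + b^2*z2 + c^2*z3)" using assms(8) by (simp add: power2_eq_square)
  ultimately show ?thesis unfolding good_def using assms e x_def
    by (intro exI[of _ x]) auto
qed

lemma goodC:
  fixes p :: int and y w :: "nat \<Rightarrow> int"
  assumes p: "prime p" "p > 2" and C: "C \<subseteq> {i..<j}" and lz: "lz \<in> C" "\<not> p dvd y lz"
    and rest: "\<forall>l\<in>{i..<j} - C. p dvd y l" and nw: "\<forall>l\<in>C. \<not> p dvd w l"
    and S: "p dvd (\<Sum>l\<in>C. (w l)^2 * y l)"
  shows "good p y i j"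
proof -
  define x where "x = (\<lambda>l. if l \<in> C then w l else 1)"
  have fin: "finite {i..<j}" by simp
  have "(\<Sum>l\<in>{i..<j}. (x l)^2 * y l) = (\<Sum>l\<in>{i..<j} - C. (x l)^2 * y l) + (\<Sum>l\<in>C. (x l)^2 * y l)"
    using sum.subset_diff[OF C fin] by blast
  also have "(\<Sum>l\<in>C. (x l)^2 * y l) = (\<Sum>l\<in>C. (w l)^2 * y l)"
    unfolding x_def by (rule sum.cong) auto
  finally have e: "(\<Sum>l\<in>{i..<j}. (x l)^2 * y l) = (\<Sum>l\<in>{i..<j} - C. (x l)^2 * y l) + (\<Sum>l\<in>C. (w l)^2 * y l)" .
  have "p dvd (\<Sum>l\<in>{i..<j} - C. (x l)^2 * y l)"
    using rest by (intro dvd_sum) auto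
  hence "p dvd (\<Sum>l\<in>{i..<j}. (x l)^2 * y l)" unfolding e using S by simp
  moreover have "\<forall>l\<in>{i..<j}. \<not> p dvd x l" using nw p unfolding x_def by auto
  moreover have "lz \<in> {i..<j}" using lz(1) C by blast
  ultimately obtain x' where "(\<forall>l\<in>{i..<j}. \<not> p dvd x' l) \<and> p^2 dvd (\<Sum>l\<in>{i..<j}. (x' l)^2 * y l)"
    using lift[where p=p and I="{i..<j}" and y=y and x=x] p fin lz(2) by blast
  thus ?thesis unfolding good_def by blast
qed

lemma coreU:
  fixes p :: int and y :: "nat \<Rightarrow> int"
  assumes p: "prime p" "p > 2" and U: "U = {l. l < 9 \<and> \<not> p dvd y l}" and c: "card U \<ge> 3"
  shows "\<exists>i j. i < j \<and> j \<le> 9 \<and> good p y i j"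
proof -
  have finU: "finite U" unfolding U by auto
  have ne: "U \<noteq> {}" using c by auto
  define u1 where "u1 = Min U"
  have u1: "u1 \<in> U" "\<forall>l\<in>U. u1 \<le> l" unfolding u1_def using finU ne by auto
  define U1 where "U1 = U - {u1}"
  have cU1: "card U1 \<ge> 2" unfolding U1_def using c u1 finU by auto
  have ne1: "U1 \<noteq> {}"
  proof
    assume "U1 = {}" thus False using cU1 by simp
  qed
  have fin1: "finite U1" unfolding U1_def using finU by auto
  define u2 where "u2 = Min U1"
  have u2: "u2 \<in> U1" "\<forall>l\<in>U1. u2 \<le> l" unfolding u2_def using ne1 fin1 by auto
  define U2 where "U2 = U1 - {u2}"
  have cU2: "card U2 \<ge> 1" unfolding U2_def using cU1 u2 fin1 by auto
  have ne2: "U2 \<noteq> {}"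
  proof
    assume "U2 = {}" thus False using cU2 by simp
  qed
  have fin2: "finite U2" unfolding U2_def using fin1 by auto
  define u3 where "u3 = Min U2"
  have u3: "u3 \<in> U2" "\<forall>l\<in>U2. u3 \<le> l" unfolding u3_def using ne2 fin2 by auto
  have inU: "u1 \<in> U" "u2 \<in> U" "u3 \<in> U" using u1(1) u2(1) u3(1) unfolding U1_def U2_def by auto
  have neq: "u2 \<noteq> u1" "u3 \<noteq> u2" "u3 \<in> U1" using u2(1) u3(1) unfolding U1_def U2_def by auto
  have le: "u1 \<le> u2" "u2 \<le> u3" using u1(2) u2(2) inU neq by auto
  have lt: "u1 < u2" "u2 < u3" "u3 < 9" using le neq inU(3) unfolding U by auto
  have gap1: "l \<notin> U" if "u1 < l" "l < u2" for l
  proof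
    assume "l \<in> U" hence "l \<in> U1" unfolding U1_def using that by auto
    thus False using u2(2) that by force
  qed
  have gap2: "l \<notin> U" if "u2 < l" "l < u3" for l
  proof
    assume "l \<in> U" hence "l \<in> U2" unfolding U2_def U1_def using that lt by auto
    thus False using u3(2) that by force
  qed
  have nd: "\<not> p dvd y u1" "\<not> p dvd y u2" "\<not> p dvd y u3" using inU unfolding U by auto
  have nU: "\<And>l. l < 9 \<Longrightarrow> l \<notin> U \<Longrightarrow> p dvd y l" unfolding U by auto
  from lemK[OF p nd] show ?thesis
  proof (elim disjE exE conjE)
    fix a b assume ab: "\<not> p dvd a" "\<not> p dvd b" "p dvd a^2 * y u1 + b^2 * y u2"
    define w where "w = (\<lambda>l. if l = u1 then a else b)"
    have "good p y u1 (Suc u2)"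
    proof (rule goodC[OF p, where C="{u1,u2}" and lz=u1 and w=w])
      show "\<forall>l\<in>{u1..<Suc u2} - {u1, u2}. p dvd y l"
      proof
        fix l assume l: "l \<in> {u1..<Suc u2} - {u1, u2}"
        hence "u1 < l" "l < u2" by auto
        hence "l \<notin> U" by (rule gap1)
        thus "p dvd y l" using nU \<open>l < u2\<close> lt by auto
      qed
      show "p dvd (\<Sum>l\<in>{u1, u2}. (w l)^2 * y l)" using ab lt unfolding w_def by simp
    qed (use lt nd ab w_def in auto)
    thus ?thesis using lt by (intro exI[of _ u1] exI[of _ "Suc u2"]) auto
  next
    fix a b assume ab: "\<not> p dvd a" "\<not> p dvd b" "p dvd a^2 * y u2 + b^2 * y u3"
    define w where "w = (\<lambda>l. if l = u2 then a else b)"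
    have "good p y u2 (Suc u3)"
    proof (rule goodC[OF p, where C="{u2,u3}" and lz=u2 and w=w])
      show "\<forall>l\<in>{u2..<Suc u3} - {u2, u3}. p dvd y l"
      proof
        fix l assume l: "l \<in> {u2..<Suc u3} - {u2, u3}"
        hence "u2 < l" "l < u3" by auto
        hence "l \<notin> U" by (rule gap2)
        thus "p dvd y l" using nU \<open>l < u3\<close> lt by auto
      qed
      show "p dvd (\<Sum>l\<in>{u2, u3}. (w l)^2 * y l)" using ab lt unfolding w_def by simp
    qed (use lt nd ab w_def in auto)
    thus ?thesis using lt by (intro exI[of _ u2] exI[of _ "Suc u3"]) auto
  next
    fix a b cc assume ab: "\<not> p dvd a" "\<not> p dvd b" "\<not> p dvd cc"
      "p dvd a^2 * y u1 + b^2 * y u2 + cc^2 * y u3"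
    define w where "w = (\<lambda>l. if l = u1 then a else if l = u2 then b else cc)"
    have "good p y u1 (Suc u3)"
    proof (rule goodC[OF p, where C="{u1,u2,u3}" and lz=u1 and w=w])
      show "\<forall>l\<in>{u1..<Suc u3} - {u1, u2, u3}. p dvd y l"
      proof
        fix l assume l: "l \<in> {u1..<Suc u3} - {u1, u2, u3}"
        have "l \<notin> U"
        proof (cases "l < u2")
          case True thus ?thesis using l gap1 by auto
        next
          case False thus ?thesis using l gap2 by (simp add: nat_less_le)
        qed
        thus "p dvd y l" using nU l lt by auto
      qed
      show "p dvd (\<Sum>l\<in>{u1, u2, u3}. (w l)^2 * y l)" using ab lt unfolding w_def
        by (simp add: algebra_simps)
    qed (use lt nd ab w_def in auto)
    thus ?thesis using lt by (intro exI[of _ u1] exI[of _ "Suc u3"]) auto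
  qed
qed

lemma coreP3:
  fixes p :: int and y :: "nat \<Rightarrow> int"
  assumes p: "prime p" "p > 2" and d: "p dvd y i" "p dvd y (Suc i)" "p dvd y (Suc (Suc i))"
    and nd: "\<not> p^2 dvd y i" "\<not> p^2 dvd y (Suc i)" "\<not> p^2 dvd y (Suc (Suc i))"
  shows "good p y i (i+2) \<or> good p y (Suc i) (Suc i + 2) \<or> good p y i (i+3)"
proof -
  obtain z1 z2 z3 where z: "y i = p * z1" "y (Suc i) = p * z2" "y (Suc (Suc i)) = p * z3"
    using d by (auto elim!: dvdE)
  have nz: "\<not> p dvd z1" "\<not> p dvd z2" "\<not> p dvd z3"
  proof -
    have "\<not> p dvd zz" if "y l = p * zz" "\<not> p^2 dvd y l" for l zz
    proof
      assume "p dvd zz" hence "p*p dvd p*zz" by simp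
      thus False using that by (simp add: power2_eq_square)
    qed
    thus "\<not> p dvd z1" "\<not> p dvd z2" "\<not> p dvd z3" using nd z by blast+
  qed
  from lemK[OF p nz] show ?thesis
  proof (elim disjE exE conjE)
    fix a b assume "\<not> p dvd a" "\<not> p dvd b" "p dvd a^2 * z1 + b^2 * z2"
    thus ?thesis using good2[where y=y and i=i, OF p(1) z(1,2)] by blast
  next
    fix a b assume "\<not> p dvd a" "\<not> p dvd b" "p dvd a^2 * z2 + b^2 * z3"
    thus ?thesis using good2[where y=y and i="Suc i", OF p(1) z(2,3)] by blast
  next
    fix a b c assume "\<not> p dvd a" "\<not> p dvd b" "\<not> p dvd c" "p dvd a^2 * z1 + b^2 * z2 + c^2 * z3"
    thus ?thesis using good3[where y=y and i=i, OF p(1) z] by blast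
  qed
qed

lemma core:
  fixes p :: int and y :: "nat \<Rightarrow> int"
  assumes p: "prime p" "p > 2"
  shows "\<exists>i j. i < j \<and> j \<le> 9 \<and> good p y i j"
proof (cases "\<exists>l<9. p^2 dvd y l")
  case True
  then obtain l where "l < 9" "p^2 dvd y l" by auto
  thus ?thesis using good1[OF p(1)] by (intro exI[of _ l] exI[of _ "Suc l"]) auto
next
  case False
  define U where "U = {l. l < 9 \<and> \<not> p dvd y l}"
  show ?thesis
  proof (cases "card U \<ge> 3")
    case True thus ?thesis using coreU[OF p U_def] by blast
  next
    case False
    have "\<exists>i\<in>{0,3,6::nat}. p dvd y i \<and> p dvd y (Suc i) \<and> p dvd y (Suc (Suc i))"
    proof (rule ccontr)
      assume h: "\<not> ?thesis"
      have h0: "\<not> (p dvd y 0 \<and> p dvd y (Suc 0) \<and> p dvd y (Suc (Suc 0)))" using h by blast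
      have h3: "\<not> (p dvd y 3 \<and> p dvd y (Suc 3) \<and> p dvd y (Suc (Suc 3)))" using h by blast
      have h6: "\<not> (p dvd y 6 \<and> p dvd y (Suc 6) \<and> p dvd y (Suc (Suc 6)))" using h by blast
      obtain a where a: "a \<in> {0, Suc 0, Suc (Suc 0)}" "\<not> p dvd y a" using h0 by blast
      obtain b where b: "b \<in> {3, Suc 3, Suc (Suc 3)}" "\<not> p dvd y b" using h3 by blast
      obtain c where c: "c \<in> {6, Suc 6, Suc (Suc 6)}" "\<not> p dvd y c" using h6 by blast
      have abc: "a \<in> U" "b \<in> U" "c \<in> U" "a < 3" "3 \<le> b" "b < 6" "6 \<le> c"
        using a b c unfolding U_def by auto
      have "{a,b,c} \<subseteq> U" using abc by auto
      moreover have "finite U" unfolding U_def by auto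
      ultimately have "card {a,b,c} \<le> card U" by (rule card_mono[rotated])
      moreover have "card {a,b,c} = 3" using abc by auto
      ultimately show False using False by simp
    qed
    then obtain i where i: "i \<in> {0,3,6::nat}" "p dvd y i" "p dvd y (Suc i)" "p dvd y (Suc (Suc i))"
      by blast
    have lt: "Suc (Suc i) < 9" using i(1) by auto
    have nd: "\<not> p^2 dvd y i" "\<not> p^2 dvd y (Suc i)" "\<not> p^2 dvd y (Suc (Suc i))"
      using \<open>\<not> (\<exists>l<9. p^2 dvd y l)\<close> lt by auto
    from coreP3[OF p i(2-4) nd] show ?thesis
    proof (elim disjE)
      assume "good p y i (i+2)" thus ?thesis using lt by (intro exI[of _ i] exI[of _ "i+2"]) auto
    next
      assume "good p y (Suc i) (Suc i+2)" thus ?thesis using lt by (intro exI[of _ "Suc i"] exI[of _ "Suc i+2"]) auto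
    next
      assume "good p y i (i+3)" thus ?thesis using lt by (intro exI[of _ i] exI[of _ "i+3"]) auto
    qed
  qed
qed



lemma reidx:
  fixes g :: "nat \<Rightarrow> int"
  shows "i \<le> j \<Longrightarrow> (\<Sum>l<j-i. g (i+l)) = (\<Sum>l\<in>{i..<j}. (g l :: int))"
  using sum.shift_bounds_nat_ivl[of g 0 i "j-i"] by (simp add: atLeast0LessThan add.commute)

theorem mainTheorem17:
  fixes n :: nat
  assumes "n > 1" and "odd n" and "\<exists>m. n = m ^ 2"
  shows "consec_property n (S_star n) 9 \<and> C_A n (S_star n) \<le> 9"
proof -
  obtain m where nm: "n = m^2" using assms(3) by auto
  have m1: "m \<noteq> 1" using assms(1) nm by auto
  have om: "odd m" using assms(2) nm by auto
  obtain p0 where p0: "prime p0" "p0 dvd m" using prime_factor_nat[OF m1] by blast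
  have "p0 \<noteq> 2" using p0(2) om by auto
  hence p02: "p0 > 2" using prime_ge_2_nat[OF p0(1)] by linarith
  obtain k where mk: "m = p0 * k" using p0(2) by (auto elim: dvdE)
  have kpos: "k > 0" using mk assms(1) nm by (cases k) auto
  define p where "p = int p0"
  have p: "prime p" "p > 2" unfolding p_def using p0(1) p02 by auto
  have nint: "int n = (int k)^2 * p^2" unfolding nm mk p_def by (simp add: power_mult_distrib)
  have npos: "n > 0" using assms(1) by auto
  have cp: "consec_property n (S_star n) 9"
    unfolding consec_property_def
  proof (intro allI impI)
    fix ys :: "nat list" assume ys: "length ys = 9 \<and> set ys \<subseteq> {0..<n}"
    define y where "y = (\<lambda>l. int (ys ! l))"
    obtain i j where ij: "i < j" "j \<le> 9" and g: "good p y i j" using core[OF p] by blast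
    then obtain x where nx: "\<forall>l\<in>{i..<j}. \<not> p dvd x l"
      and S: "p^2 dvd (\<Sum>l\<in>{i..<j}. (x l)^2 * y l)" unfolding good_def by blast
    define w where "w = (\<lambda>l. nat \<bar>int k * x (i+l)\<bar>)"
    define a where "a = (\<lambda>l. (w l mod n)^2 mod n)"
    define blk where "blk = drop i (take j ys)"
    have lb: "length blk = j - i" unfolding blk_def using ys ij by simp
    have nth: "\<And>l. l < j - i \<Longrightarrow> blk ! l = ys ! (i + l)" unfolding blk_def using ys ij by simp
    have aint: "int (a l) = (int k * x (i+l))^2 mod int n" for l
    proof -
      have "a l = (w l)^2 mod n" unfolding a_def by (simp add: power_mod)
      hence "int (a l) = int ((w l)^2) mod int n" by (simp add: of_nat_mod)
      also have "int ((w l)^2) = (int k * x (i+l))^2" unfolding w_def by simp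
      finally show ?thesis .
    qed
    have "\<forall>l<length blk. a l \<in> S_star n"
    proof (intro allI impI)
      fix l assume l: "l < length blk"
      have "a l \<noteq> 0"
      proof
        assume "a l = 0"
        hence "int n dvd (int k * x (i+l))^2" using aint[of l] by (simp add: dvd_eq_mod_eq_0)
        hence "(int k)^2 * p^2 dvd (int k)^2 * (x (i+l))^2" unfolding nint by (simp add: power_mult_distrib)
        hence "p^2 dvd (x (i+l))^2" using kpos by simp
        hence "p dvd (x (i+l))^2" by (rule dvd_trans[rotated]) simp
        hence "p dvd x (i+l)" using p(1) prime_dvd_power by blast
        moreover have "i + l \<in> {i..<j}" using l lb by auto
        ultimately show False using nx by blast
      qed
      moreover have "w l mod n < n" using npos by simp
      ultimately show "a l \<in> S_star n" unfolding S_star_def a_def by blast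
    qed
    moreover have "(\<Sum>l<length blk. a l * blk ! l) mod n = 0"
    proof -
      have "int (\<Sum>l<length blk. a l * blk ! l) = (\<Sum>l<j-i. int (a l) * y (i+l))"
        unfolding lb y_def by (simp add: nth)
      also have "[(\<Sum>l<j-i. int (a l) * y (i+l)) = (\<Sum>l<j-i. (int k)^2 * ((x (i+l))^2 * y (i+l)))] (mod int n)"
      proof (rule cong_sum)
        fix l
        have "[int (a l) = (int k * x (i+l))^2] (mod int n)" unfolding aint by (simp add: cong_def)
        thus "[int (a l) * y (i+l) = (int k)^2 * ((x (i+l))^2 * y (i+l))] (mod int n)"
          using cong_mult[OF _ cong_refl, of "int (a l)" "(int k * x (i+l))^2" "int n" "y (i+l)"]
          by (simp add: power_mult_distrib algebra_simps)
      qed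
      also have "(\<Sum>l<j-i. (int k)^2 * ((x (i+l))^2 * y (i+l))) = (int k)^2 * (\<Sum>l<j-i. (x (i+l))^2 * y (i+l))"
        by (simp add: sum_distrib_left)
      also have "\<dots> = (int k)^2 * (\<Sum>l\<in>{i..<j}. (x l)^2 * y l)"
        using reidx[of i j "\<lambda>l. (x l)^2 * y l"] ij by simp
      finally have "[int (\<Sum>l<length blk. a l * blk ! l) = (int k)^2 * (\<Sum>l\<in>{i..<j}. (x l)^2 * y l)] (mod int n)" .
      moreover have "int n dvd (int k)^2 * (\<Sum>l\<in>{i..<j}. (x l)^2 * y l)"
        unfolding nint using S by simp
      ultimately have "int n dvd int (\<Sum>l<length blk. a l * blk ! l)"
        using cong_dvd_iff by blast
      thus ?thesis by (simp add: dvd_eq_mod_eq_0[symmetric] del: of_nat_sum)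
    qed
    ultimately have "weighted_zero_sum n (S_star n) blk"
      unfolding weighted_zero_sum_def using lb ij by (intro conjI exI[of _ a]) auto
    thus "\<exists>i j. i < j \<and> j \<le> 9 \<and> weighted_zero_sum n (S_star n) (drop i (take j ys))"
      using ij unfolding blk_def by blast
  qed
  moreover have "C_A n (S_star n) \<le> 9"
    unfolding C_A_def by (rule Least_le) (use cp in simp)
  ultimately show ?thesis by blast
qed

end
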